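(* Consider the closed compartmental model of a balanced mass action reaction network with diffusion, $$\dot X=-\big(( *_0)^{-1}\otimes I_m\big)(\mathbf{d}\otimes I_m)^{\mathrm{T}}( *_1\otimes I_m)R_d(X)(\mathbf{d}\otimes I_m)\frac{X}{X^*}+F(X),$$ with all objects as described in the context, and assume the global persistency property: for every $X_0\in\mathbb{R}_+^{mN}$ the solution with $X(0)=X_0$ satisfies $\liminf_{t\to\infty}X(t)>0$ (componentwise). Then for every initial condition $X(0)\in\mathbb{R}_+^{mN}$, as $t\to\infty$ the compartment concentrations $x^1(t),\dots,x^N(t)$ converge to the set of configurations with $x^1=\cdots=x^N\in\mathcal{E}$, where $\mathcal{E}=\{x^{**}\in\mathbb{R}_+^m: S^{\mathrm{T}}\mathrm{Ln}(x^{**})=S^{\mathrm{T}}\mathrm{Ln}(x^* )\}$ and $S=ZB$.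
   Context: Reaction network: $m$ species, $c$ complexes, $r$ reactions; $Z$ is the $m\times c$ complex stoichiometric matrix (nonnegative integer entries, column $\rho$ gives the species composition of complex $\rho$); $B$ is the $c\times r$ incidence matrix of the directed complex graph; $S=ZB$ is the stoichiometric matrix; $x^*\in\mathbb{R}_+^m$ (all entries strictly positive) is a thermodynamic equilibrium and $\mathcal{K}(x^* )=\mathrm{diag}(\kappa_1,\dots,\kappa_r)$ with all $\kappa_j>0$ (balanced reaction constants). The reaction vector field is $f(x)=-ZB\mathcal{K}(x^* )B^{\mathrm{T}}\mathrm{Exp}\big(Z^{\mathrm{T}}\mathrm{Ln}(x/x^* )\big)$, where $\mathrm{Ln}$, $\mathrm{Exp}$ act componentwise and $x/x^*$ is the componentwise quotient. Spatial discretization: a simplicial triangulation $K$ of a connected spatial domain, with $N$ vertices (compartments) and $N_e$ edges, whose 1-skeleton is a connected graph; $\mathbf{d}$ is the $N_e\times N$ transpose of the oriented vertex-edge incidence matrix of the 1-skeleton; $*_0$ is an $N\times N$ positive diagonal matrix (volumes of the dual cells of the vertices) and $*_1$ an $N_e\times N_e$ positive diagonal matrix. $X=((x^1)^{\mathrm{T}},\dots,(x^N)^{\mathrm{T}})^{\mathrm{T}}\in\mathbb{R}^{mN}$ with $x^j$ the concentrations in compartment $j$, $X^*=((x^* )^{\mathrm{T}},\dots,(x^* )^{\mathrm{T}})^{\mathrm{T}}$, $X/X^*$ the componentwise quotient, $F(X)=(f(x^1)^{\mathrm{T}},\dots,f(x^N)^{\mathrm{T}})^{\mathrm{T}}$.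 $R_d(X)$ is an $mN_e\times mN_e$ diagonal matrix with $R_d(X)\ge\alpha I$ for some $\alpha>0$, depending continuously differentiably on $X$. $\otimes$ is the Kronecker product, $I_m$ the $m\times m$ identity, $\mathbb{R}_+^{k}$ the vectors with all entries strictly positive. *)

theory Defs
  imports "HOL-Analysis.Analysis"
begin

text \<open>Vectors in R^k are modelled as real^'k for a finite index type 'k.
  Species: 'm, complexes: 'c, reactions: 'r, vertices (compartments): 'n, edges: 'e.\<close>

definition vln :: "real^'a \<Rightarrow> real^'a" where
  "vln x = (\<chi> i. ln (x$i))"

definition vexp :: "real^'a \<Rightarrow> real^'a" where
  "vexp x = (\<chi> i. exp (x$i))"

definition vdiv :: "real^'a \<Rightarrow> real^'a \<Rightarrow> real^'a" where
  "vdiv x y = (\<chi> i. x$i / y$i)"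

definition diag_mat :: "real^'a \<Rightarrow> real^'a^'a" where
  "diag_mat k = (\<chi> i j. if i = j then k$i else 0)"

definition is_diagonal :: "real^'a^'a \<Rightarrow> bool" where
  "is_diagonal A \<longleftrightarrow> (\<forall>i j. i \<noteq> j \<longrightarrow> A$i$j = 0)"

definition positive_diagonal :: "real^'a^'a \<Rightarrow> bool" where
  "positive_diagonal A \<longleftrightarrow> is_diagonal A \<and> (\<forall>i. A$i$i > 0)"

text \<open>Action of the Kronecker product (A \<otimes> I_m) on a stacked block vector
  Y = (Y^1,...,Y^k) with blocks Y^b in real^'m: block a of the result is
  sum_b A_ab Y^b.\<close>
definition kron_I :: "real^'b^'a \<Rightarrow> (real^'m)^'b \<Rightarrow> (real^'m)^'a" where
  "kron_I A Y = (\<chi> a. \<Sum>b\<in>UNIV. A$a$b *\<^sub>R Y$b)"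

text \<open>Action of an mN_e x mN_e diagonal matrix, given by its diagonal D.\<close>
definition diag_apply :: "(real^'m)^'e \<Rightarrow> (real^'m)^'e \<Rightarrow> (real^'m)^'e" where
  "diag_apply D Y = (\<chi> e. \<chi> i. D$e$i * Y$e$i)"

text \<open>B (c x r) is the incidence matrix of a directed graph: column j has -1 at the
  reactant complex, +1 at the product complex, 0 elsewhere.\<close>
definition is_incidence_matrix :: "real^'r^'c \<Rightarrow> bool" where
  "is_incidence_matrix B \<longleftrightarrow>
     (\<forall>j. \<exists>a b. a \<noteq> b \<and> (\<forall>\<rho>. B$\<rho>$j = (if \<rho> = b then 1 else if \<rho> = a then -1 else 0)))"

text \<open>d (N_e x N) is the transpose of the oriented vertex-edge incidence matrix of a
  simple connected graph (the 1-skeleton of the triangulation).\<close>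
definition is_connected_skeleton_d :: "real^'n^'e \<Rightarrow> bool" where
  "is_connected_skeleton_d d \<longleftrightarrow>
     (\<forall>e. \<exists>u v. u \<noteq> v \<and> (\<forall>w. d$e$w = (if w = v then 1 else if w = u then -1 else 0)))
   \<and> (\<forall>e e'. e \<noteq> e' \<longrightarrow> \<not> (\<forall>w. d$e$w \<noteq> 0 \<longleftrightarrow> d$e'$w \<noteq> 0))
   \<and> (\<forall>u v. (\<lambda>a b. \<exists>e. d$e$a \<noteq> 0 \<and> d$e$b \<noteq> 0)\<^sup>*\<^sup>* u v)"

definition reaction_field ::
  "real^'c^'m \<Rightarrow> real^'r^'c \<Rightarrow> real^'r \<Rightarrow> real^'m \<Rightarrow> real^'m \<Rightarrow> real^'m" where
  "reaction_field Z B \<kappa> xs x =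
     - (Z *v (B *v (diag_mat \<kappa> *v (transpose B *v vexp (transpose Z *v vln (vdiv x xs))))))"

definition block_div :: "(real^'m)^'n \<Rightarrow> real^'m \<Rightarrow> (real^'m)^'n" where
  "block_div X xs = (\<chi> j. vdiv (X$j) xs)"

definition compartmental_rhs ::
  "real^'c^'m \<Rightarrow> real^'r^'c \<Rightarrow> real^'r \<Rightarrow> real^'m \<Rightarrow> real^'n^'e \<Rightarrow> real^'n^'n \<Rightarrow> real^'e^'e
   \<Rightarrow> ((real^'m)^'n \<Rightarrow> (real^'m)^'e) \<Rightarrow> (real^'m)^'n \<Rightarrow> (real^'m)^'n" where
  "compartmental_rhs Z B \<kappa> xs d s0 s1 Rd X =
     - kron_I (matrix_inv s0) (kron_I (transpose d) (kron_I s1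
         (diag_apply (Rd X) (kron_I d (block_div X xs)))))
     + (\<chi> j. reaction_field Z B \<kappa> xs (X$j))"

definition pos_orthant :: "((real^'m)^'n) set" where
  "pos_orthant = {X. \<forall>j i. X$j$i > 0}"

definition is_solution :: "((real^'m)^'n \<Rightarrow> (real^'m)^'n) \<Rightarrow> (real \<Rightarrow> (real^'m)^'n) \<Rightarrow> bool" where
  "is_solution G X \<longleftrightarrow>
     (\<forall>t\<ge>0. X t \<in> pos_orthant \<and> (X has_vector_derivative G (X t)) (at t within {0..}))"

end

theory Submission
  imports Defs
begin


lemma kron_I_nth: "kron_I A Y $ a $ i = (\<Sum>b\<in>UNIV. A$a$b * Y$b$i)"
  by (simp add: kron_I_def sum_component)

lemma diag_apply_nth: "diag_apply D Y $ e $ i = D$e$i * Y$e$i"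
  by (simp add: diag_apply_def)

lemma block_div_nth: "block_div X xs $ j $ i = X$j$i / xs$i"
  by (simp add: block_div_def vdiv_def)

lemma matrix_inv_posdiag:
  fixes s0 :: "real^'n::finite^'n"
  assumes "positive_diagonal s0"
  shows "matrix_inv s0 = (\<chi> i j. if i = j then 1 / s0$i$i else 0)"
proof -
  define D :: "real^'n^'n" where "D = (\<chi> i j. if i = j then 1 / s0$i$i else 0)"
  have diag: "\<And>i j. i \<noteq> j \<Longrightarrow> s0$i$j = 0" and pos: "\<And>i. s0$i$i > 0"
    using assms by (auto simp: positive_diagonal_def is_diagonal_def)
  have pos': "\<And>i. s0$i$i \<noteq> 0" using pos by (metis less_irrefl)
  have s0e: "s0 = (\<chi> i j. if i = j then s0$i$i else 0)"
    using diag by (auto simp: vec_eq_iff)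
  have 1: "s0 ** D = mat 1"
    apply (subst s0e)
    using pos' by (simp add: D_def matrix_matrix_mult_def mat_def vec_eq_iff if_distrib[of "\<lambda>x. _ * x"] cong: if_cong)
  have 2: "D ** s0 = mat 1"
    apply (subst s0e)
    using pos' by (simp add: D_def matrix_matrix_mult_def mat_def vec_eq_iff if_distrib[of "\<lambda>x. _ * x"] cong: if_cong)
  define M where "M = matrix_inv s0"
  have "s0 ** M = mat 1 \<and> M ** s0 = mat 1"
    unfolding M_def matrix_inv_def by (rule someI[of _ D]) (use 1 2 in auto)
  then have "M = M ** (s0 ** D)" "M ** s0 = mat 1" using 1 by auto
  then have "M = D" by (simp add: matrix_mul_assoc)
  then show ?thesis by (simp add: M_def D_def)
qed

lemma edge_sum:
  fixes a :: "'n::finite \<Rightarrow> real"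
  assumes "u \<noteq> v" "\<forall>w. d$e$w = (if w = v then 1 else if w = u then -1 else 0)"
  shows "(\<Sum>w\<in>UNIV. d$e$w * a w) = a v - a u"
proof -
  have "(\<Sum>w\<in>UNIV. d$e$w * a w) = (\<Sum>w\<in>UNIV. (if w = v then a v else 0) - (if w = u then a u else 0))"
    by (rule sum.cong) (use assms in auto)
  also have "\<dots> = a v - a u" by (simp add: sum_subtractf)
  finally show ?thesis .
qed

lemma ln_mono_prod:
  fixes a b :: real
  assumes "a > 0" "b > 0"
  shows "(ln a - ln b) * (a - b) \<ge> 0" and "(ln a - ln b) * (a - b) = 0 \<Longrightarrow> a = b"
proof -
  show "(ln a - ln b) * (a - b) \<ge> 0"
  proof (cases "a \<le> b")
    case True then have "ln a \<le> ln b" using assms by simp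
    then show ?thesis using True by (simp add: mult_nonpos_nonpos)
  next
    case False then have "ln a \<ge> ln b" using assms by simp
    then show ?thesis using False by simp
  qed
  show "a = b" if "(ln a - ln b) * (a - b) = 0"
    using that assms by auto
qed

lemma exp_mono_prod:
  fixes a b :: real
  shows "(a - b) * (exp a - exp b) \<ge> 0" and "(a - b) * (exp a - exp b) = 0 \<Longrightarrow> a = b"
proof -
  show "(a - b) * (exp a - exp b) \<ge> 0"
  proof (cases "a \<le> b")
    case True then have "exp a \<le> exp b" by simp
    then show ?thesis using True by (simp add: mult_nonpos_nonpos)
  next
    case False then have "exp a \<ge> exp b" by simp
    then show ?thesis using False by simp
  qed
  show "a = b" if "(a - b) * (exp a - exp b) = 0"
    using that by auto
qed

lemma sum_mv_transpose:
  fixes A :: "real^'b::finite^'a::finite"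
  shows "(\<Sum>i\<in>UNIV. L$i * (A *v w)$i) = (\<Sum>k\<in>UNIV. (transpose A *v L)$k * w$k)"
proof -
  have "(\<Sum>i\<in>UNIV. L$i * (A *v w)$i) = (\<Sum>i\<in>UNIV. \<Sum>k\<in>UNIV. L$i * A$i$k * w$k)"
    by (simp add: matrix_vector_mult_def sum_distrib_left mult.assoc)
  also have "\<dots> = (\<Sum>k\<in>UNIV. \<Sum>i\<in>UNIV. L$i * A$i$k * w$k)" by (rule sum.swap)
  also have "\<dots> = (\<Sum>k\<in>UNIV. (transpose A *v L)$k * w$k)"
    by (simp add: matrix_vector_mult_def transpose_def sum_distrib_left mult.commute)
  finally show ?thesis .
qed

lemma kron_inv_nth:
  assumes "positive_diagonal s0"
  shows "kron_I (matrix_inv s0) U $ j $ i = U$j$i / s0$j$j"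
proof -
  have "kron_I (matrix_inv s0) U $ j $ i = (\<Sum>b\<in>UNIV. (if b = j then U$j$i / s0$j$j else 0))"
    unfolding kron_I_nth matrix_inv_posdiag[OF assms] by (rule sum.cong) auto
  then show ?thesis by simp
qed

lemma kron_diag_nth:
  assumes "positive_diagonal s1"
  shows "kron_I s1 U $ j $ i = s1$j$j * U$j$i"
proof -
  have "kron_I s1 U $ j $ i = (\<Sum>b\<in>UNIV. (if b = j then s1$j$j * U$j$i else 0))"
    unfolding kron_I_nth by (rule sum.cong) (use assms in \<open>auto simp: positive_diagonal_def is_diagonal_def\<close>)
  then show ?thesis by simp
qed

lemma diffusion_identity:
  fixes d :: "real^'n::finite^'e::finite" and s0 :: "real^'n^'n" and s1 :: "real^'e^'e"
    and R :: "(real^'m::finite)^'e" and y :: "(real^'m)^'n" and L :: "'n \<Rightarrow> 'm \<Rightarrow> real"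
  assumes s0: "positive_diagonal s0" and s1: "positive_diagonal s1"
  shows "(\<Sum>j\<in>UNIV. \<Sum>i\<in>UNIV. s0$j$j * L j i *
      kron_I (matrix_inv s0) (kron_I (transpose d) (kron_I s1 (diag_apply R (kron_I d y)))) $ j $ i)
   = (\<Sum>e\<in>UNIV. \<Sum>i\<in>UNIV. s1$e$e * R$e$i * (\<Sum>j\<in>UNIV. d$e$j * L j i) * (\<Sum>k\<in>UNIV. d$e$k * y$k$i))"
proof -
  define T where "T e i j = s1$e$e * R$e$i * (\<Sum>k\<in>UNIV. d$e$k * y$k$i) * (d$e$j * L j i)" for e i j
  have pos: "s0$j$j > 0" for j using s0 by (auto simp: positive_diagonal_def)
  have "(\<Sum>j\<in>UNIV. \<Sum>i\<in>UNIV. s0$j$j * L j i *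
      kron_I (matrix_inv s0) (kron_I (transpose d) (kron_I s1 (diag_apply R (kron_I d y)))) $ j $ i)
     = (\<Sum>j\<in>UNIV. \<Sum>i\<in>UNIV. \<Sum>e\<in>UNIV. T e i j)"
  proof (intro sum.cong refl)
    fix j i
    show "s0$j$j * L j i *
      kron_I (matrix_inv s0) (kron_I (transpose d) (kron_I s1 (diag_apply R (kron_I d y)))) $ j $ i
      = (\<Sum>e\<in>UNIV. T e i j)"
    proof -
      have cancel: "\<And>a b. s0$j$j * a * (b / s0$j$j) = a * b" using pos[of j] by simp
      show ?thesis
      unfolding kron_inv_nth[OF s0] cancel kron_I_nth[of "transpose d"] kron_diag_nth[OF s1] diag_apply_nth
        kron_I_nth[of d]
      by (simp add: transpose_def T_def sum_distrib_left mult_ac)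
    qed
  qed
  also have "\<dots> = (\<Sum>j\<in>UNIV. \<Sum>e\<in>UNIV. \<Sum>i\<in>UNIV. T e i j)"
    by (intro sum.cong refl) (rule sum.swap)
  also have "\<dots> = (\<Sum>e\<in>UNIV. \<Sum>j\<in>UNIV. \<Sum>i\<in>UNIV. T e i j)"
    by (rule sum.swap)
  also have "\<dots> = (\<Sum>e\<in>UNIV. \<Sum>i\<in>UNIV. \<Sum>j\<in>UNIV. T e i j)"
    by (intro sum.cong refl) (rule sum.swap)
  also have "\<dots> = (\<Sum>e\<in>UNIV. \<Sum>i\<in>UNIV. s1$e$e * R$e$i * (\<Sum>j\<in>UNIV. d$e$j * L j i) * (\<Sum>k\<in>UNIV. d$e$k * y$k$i))"
    by (simp add: T_def sum_distrib_left mult_ac)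
  finally show ?thesis .
qed

lemma diag_mat_mv: "(diag_mat \<kappa> *v w) $ k = \<kappa>$k * w$k"
proof -
  have "(diag_mat \<kappa> *v w) $ k = (\<Sum>j\<in>UNIV. if k = j then \<kappa>$j * w$j else 0)"
    unfolding matrix_vector_mult_def diag_mat_def vec_lambda_beta by (rule sum.cong) auto
  then show ?thesis by simp
qed

lemma reaction_identity:
  fixes Z :: "real^'c::finite^'m::finite" and B :: "real^'r::finite^'c"
  shows "(\<Sum>i\<in>UNIV. vln (vdiv x xs)$i * reaction_field Z B \<kappa> xs x $ i)
    = - (\<Sum>k\<in>UNIV. \<kappa>$k * (transpose B *v (transpose Z *v vln (vdiv x xs)))$k
            * (transpose B *v vexp (transpose Z *v vln (vdiv x xs)))$k)"
proof -
  let ?L = "vln (vdiv x xs)"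
  let ?u = "transpose Z *v ?L"
  let ?e = "transpose B *v vexp ?u"
  have "(\<Sum>i\<in>UNIV. ?L$i * reaction_field Z B \<kappa> xs x $ i)
      = - (\<Sum>i\<in>UNIV. ?L$i * (Z *v (B *v (diag_mat \<kappa> *v ?e)))$i)"
    by (simp add: reaction_field_def sum_negf)
  also have "(\<Sum>i\<in>UNIV. ?L$i * (Z *v (B *v (diag_mat \<kappa> *v ?e)))$i)
      = (\<Sum>c\<in>UNIV. ?u$c * (B *v (diag_mat \<kappa> *v ?e))$c)"
    by (rule sum_mv_transpose)
  also have "\<dots> = (\<Sum>k\<in>UNIV. (transpose B *v ?u)$k * (diag_mat \<kappa> *v ?e)$k)"
    by (rule sum_mv_transpose)
  also have "\<dots> = (\<Sum>k\<in>UNIV. \<kappa>$k * (transpose B *v ?u)$k * ?e$k)"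
    by (simp add: diag_mat_mv mult_ac)
  finally show ?thesis .
qed

lemma incid_col:
  fixes B :: "real^'r::finite^'c::finite"
  assumes "a \<noteq> b" "\<forall>\<rho>. B$\<rho>$k = (if \<rho> = b then 1 else if \<rho> = a then -1 else 0)"
  shows "(transpose B *v w)$k = w$b - w$a"
proof -
  have "(transpose B *v w)$k = (\<Sum>\<rho>\<in>UNIV. (if \<rho> = b then w$b else 0) - (if \<rho> = a then w$a else 0))"
    unfolding matrix_vector_mult_def transpose_def by simp (rule sum.cong, use assms in auto)
  also have "\<dots> = w$b - w$a" by (simp add: sum_subtractf)
  finally show ?thesis .
qed

lemma incid_prod:
  fixes B :: "real^'r::finite^'c::finite"
  assumes "is_incidence_matrix B"
  shows "(transpose B *v u)$k * (transpose B *v vexp u)$k \<ge> 0"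
    and "(transpose B *v u)$k * (transpose B *v vexp u)$k = 0 \<Longrightarrow> (transpose B *v u)$k = 0"
proof -
  obtain a b where ab: "a \<noteq> b" "\<forall>\<rho>. B$\<rho>$k = (if \<rho> = b then 1 else if \<rho> = a then -1 else 0)"
    using assms unfolding is_incidence_matrix_def by blast
  have 1: "(transpose B *v u)$k = u$b - u$a" by (rule incid_col[OF ab])
  have 2: "(transpose B *v vexp u)$k = exp (u$b) - exp (u$a)"
    using incid_col[OF ab, of "vexp u"] by (simp add: vexp_def)
  show "(transpose B *v u)$k * (transpose B *v vexp u)$k \<ge> 0"
    unfolding 1 2 by (rule exp_mono_prod(1))
  show "(transpose B *v u)$k = 0" if "(transpose B *v u)$k * (transpose B *v vexp u)$k = 0"
    using exp_mono_prod(2)[of "u$b" "u$a"] that unfolding 1 2 by simp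
qed

lemma W_decomp:
  fixes Z :: "real^'c::finite^'m::finite" and B :: "real^'r::finite^'c"
    and d :: "real^'n::finite^'e::finite" and s0 :: "real^'n^'n" and s1 :: "real^'e^'e"
    and Rd :: "(real^'m)^'n \<Rightarrow> (real^'m)^'e"
  assumes s0: "positive_diagonal s0" and s1: "positive_diagonal s1"
  shows "(\<Sum>j\<in>UNIV. \<Sum>i\<in>UNIV. s0$j$j * ln (X$j$i / xs$i) * compartmental_rhs Z B \<kappa> xs d s0 s1 Rd X $ j $ i)
   = - (\<Sum>e\<in>UNIV. \<Sum>i\<in>UNIV. s1$e$e * Rd X $e$i * (\<Sum>j\<in>UNIV. d$e$j * ln (X$j$i / xs$i))
          * (\<Sum>k\<in>UNIV. d$e$k * (X$k$i / xs$i)))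
     - (\<Sum>j\<in>UNIV. s0$j$j * (\<Sum>k\<in>UNIV. \<kappa>$k * (transpose B *v (transpose Z *v vln (vdiv (X$j) xs)))$k
            * (transpose B *v vexp (transpose Z *v vln (vdiv (X$j) xs)))$k))"
proof -
  let ?D = "kron_I (matrix_inv s0) (kron_I (transpose d) (kron_I s1 (diag_apply (Rd X) (kron_I d (block_div X xs)))))"
  have L: "ln (X$j$i / xs$i) = vln (vdiv (X$j) xs) $ i" for j i by (simp add: vln_def vdiv_def)
  have "(\<Sum>j\<in>UNIV. \<Sum>i\<in>UNIV. s0$j$j * ln (X$j$i / xs$i) * compartmental_rhs Z B \<kappa> xs d s0 s1 Rd X $ j $ i)
     = - (\<Sum>j\<in>UNIV. \<Sum>i\<in>UNIV. s0$j$j * ln (X$j$i / xs$i) * ?D $ j $ i)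
       + (\<Sum>j\<in>UNIV. s0$j$j * (\<Sum>i\<in>UNIV. vln (vdiv (X$j) xs) $ i * reaction_field Z B \<kappa> xs (X$j) $ i))"
    by (simp add: compartmental_rhs_def L algebra_simps sum.distrib sum_subtractf sum_distrib_left)
  also have "(\<Sum>j\<in>UNIV. \<Sum>i\<in>UNIV. s0$j$j * ln (X$j$i / xs$i) * ?D $ j $ i)
     = (\<Sum>e\<in>UNIV. \<Sum>i\<in>UNIV. s1$e$e * Rd X $e$i * (\<Sum>j\<in>UNIV. d$e$j * ln (X$j$i / xs$i))
          * (\<Sum>k\<in>UNIV. d$e$k * block_div X xs $k$i))"
    by (rule diffusion_identity[OF s0 s1])
  finally show ?thesis
    by (simp add: block_div_nth reaction_identity sum_negf)
qed

lemma Dterm_props: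
  fixes d :: "real^'n::finite^'e::finite" and s1 :: "real^'e^'e"
    and R :: "(real^'m::finite)^'e" and X :: "(real^'m)^'n"
  assumes d_inc: "is_connected_skeleton_d d" and s1: "positive_diagonal s1"
    and R: "\<forall>e i. R$e$i > 0" and X: "\<forall>j i. X$j$i > 0" and xs: "\<forall>i. xs$i > 0"
  shows "0 \<le> (\<Sum>e\<in>UNIV. \<Sum>i\<in>UNIV. s1$e$e * R$e$i * (\<Sum>j\<in>UNIV. d$e$j * ln (X$j$i / xs$i))
          * (\<Sum>k\<in>UNIV. d$e$k * (X$k$i / xs$i)))" (is "0 \<le> ?S")
    and "(\<Sum>e\<in>UNIV. \<Sum>i\<in>UNIV. s1$e$e * R$e$i * (\<Sum>j\<in>UNIV. d$e$j * ln (X$j$i / xs$i))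
          * (\<Sum>k\<in>UNIV. d$e$k * (X$k$i / xs$i))) = 0 \<Longrightarrow> \<forall>a b. X$a = X$b"
proof -
  have edge: "\<forall>e. \<exists>u v. u \<noteq> v \<and> (\<forall>w. d$e$w = (if w = v then 1 else if w = u then -1 else 0))"
    using d_inc unfolding is_connected_skeleton_d_def by blast
  have conn: "\<forall>u v. (\<lambda>a b. \<exists>e. d$e$a \<noteq> 0 \<and> d$e$b \<noteq> 0)\<^sup>*\<^sup>* u v"
    using d_inc unfolding is_connected_skeleton_d_def by blast
  have s1p: "s1$e$e > 0" for e using s1 by (auto simp: positive_diagonal_def)
  define y where "y k i = X$k$i / xs$i" for k i
  have ypos: "y k i > 0" for k i using X xs by (simp add: y_def)
  have trm: "0 \<le> s1$e$e * R$e$i * (\<Sum>j\<in>UNIV. d$e$j * ln (y j i)) * (\<Sum>k\<in>UNIV. d$e$k * y k i)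
     \<and> (s1$e$e * R$e$i * (\<Sum>j\<in>UNIV. d$e$j * ln (y j i)) * (\<Sum>k\<in>UNIV. d$e$k * y k i) = 0
         \<longrightarrow> (\<forall>a b. d$e$a \<noteq> 0 \<longrightarrow> d$e$b \<noteq> 0 \<longrightarrow> y a i = y b i))" for e i
  proof -
    obtain u v where uv: "u \<noteq> v" "\<forall>w. d$e$w = (if w = v then 1 else if w = u then -1 else 0)"
      using edge by blast
    have e1: "(\<Sum>j\<in>UNIV. d$e$j * ln (y j i)) = ln (y v i) - ln (y u i)"
      by (rule edge_sum[OF uv])
    have e2: "(\<Sum>k\<in>UNIV. d$e$k * y k i) = y v i - y u i"
      by (rule edge_sum[OF uv])
    have c: "s1$e$e * R$e$i > 0" using s1p R by simp
    have nn: "(ln (y v i) - ln (y u i)) * (y v i - y u i) \<ge> 0" by (rule ln_mono_prod(1)[OF ypos ypos])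
    show ?thesis
    proof
      show "0 \<le> s1$e$e * R$e$i * (\<Sum>j\<in>UNIV. d$e$j * ln (y j i)) * (\<Sum>k\<in>UNIV. d$e$k * y k i)"
      proof -
        have "0 \<le> (s1$e$e * R$e$i) * ((ln (y v i) - ln (y u i)) * (y v i - y u i))"
          by (rule mult_nonneg_nonneg) (use c nn in auto)
        then show ?thesis unfolding e1 e2 by (simp add: mult.assoc)
      qed
      show "s1$e$e * R$e$i * (\<Sum>j\<in>UNIV. d$e$j * ln (y j i)) * (\<Sum>k\<in>UNIV. d$e$k * y k i) = 0
         \<longrightarrow> (\<forall>a b. d$e$a \<noteq> 0 \<longrightarrow> d$e$b \<noteq> 0 \<longrightarrow> y a i = y b i)"
      proof (intro impI allI)
        fix a b
        assume z: "s1$e$e * R$e$i * (\<Sum>j\<in>UNIV. d$e$j * ln (y j i)) * (\<Sum>k\<in>UNIV. d$e$k * y k i) = 0"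
          and da: "d$e$a \<noteq> 0" and db: "d$e$b \<noteq> 0"
        have "(ln (y v i) - ln (y u i)) * (y v i - y u i) = 0"
          using z s1p[of e] R[rule_format, of e i] unfolding e1 e2 by (simp add: mult.assoc)
        then have "y v i = y u i" by (rule ln_mono_prod(2)[OF ypos ypos])
        moreover have "a = u \<or> a = v" "b = u \<or> b = v" using da db uv(2) by (metis)+
        ultimately show "y a i = y b i" by auto
      qed
    qed
  qed
  define F where "F e i = s1$e$e * R$e$i * (\<Sum>j\<in>UNIV. d$e$j * ln (y j i)) * (\<Sum>k\<in>UNIV. d$e$k * y k i)" for e i
  have trmF: "0 \<le> F e i \<and> (F e i = 0 \<longrightarrow> (\<forall>a b. d$e$a \<noteq> 0 \<longrightarrow> d$e$b \<noteq> 0 \<longrightarrow> y a i = y b i))" for e i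
    unfolding F_def by (rule trm)
  have Fnn: "0 \<le> F e i" for e i using trmF by blast
  have SF: "?S = (\<Sum>e\<in>UNIV. \<Sum>i\<in>UNIV. F e i)" by (simp add: F_def y_def)
  show "0 \<le> ?S" unfolding SF by (intro sum_nonneg Fnn)
  assume "?S = 0"
  then have "(\<Sum>e\<in>UNIV. \<Sum>i\<in>UNIV. F e i) = 0" using SF by simp
  then have "\<forall>e\<in>UNIV. (\<Sum>i\<in>UNIV. F e i) = 0"
    using sum_nonneg_eq_0_iff[of UNIV "\<lambda>e. \<Sum>i\<in>UNIV. F e i"] Fnn by (simp add: sum_nonneg)
  then have F0: "F e i = 0" for e i
    using sum_nonneg_eq_0_iff[of UNIV "\<lambda>i. F e i"] Fnn by simp
  have adj: "X$a = X$b" if adjab: "\<exists>e. d$e$a \<noteq> 0 \<and> d$e$b \<noteq> 0" for a b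
  proof -
    obtain e where "d$e$a \<noteq> 0" "d$e$b \<noteq> 0" using adjab by blast
    then have "y a i = y b i" for i using trmF[of e i] F0[of e i] by blast
    then have yeq: "X$a$i / xs$i = X$b$i / xs$i" for i by (simp add: y_def)
    have "X$a$i = X$b$i" for i using yeq[of i] xs[rule_format, of i] by simp
    then show ?thesis by (simp add: vec_eq_iff)
  qed
  show "\<forall>a b. X$a = X$b"
  proof (intro allI)
    fix a b
    have "(\<lambda>a b. \<exists>e. d$e$a \<noteq> 0 \<and> d$e$b \<noteq> 0)\<^sup>*\<^sup>* a b" using conn by blast
    then show "X$a = X$b"
    proof (induction rule: rtranclp_induct)
      case base then show ?case by simp
    next
      case (step b c) then show ?case using adj[of b c] by simp
    qed
  qed
qed

lemma Rterm_props:
  fixes B :: "real^'r::finite^'c::finite" and s0 :: "real^'n::finite^'n" and U :: "'n \<Rightarrow> real^'c"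
  assumes B: "is_incidence_matrix B" and s0: "positive_diagonal s0" and \<kappa>: "\<forall>k. \<kappa>$k > 0"
  shows "0 \<le> (\<Sum>j\<in>UNIV. s0$j$j * (\<Sum>k\<in>UNIV. \<kappa>$k * (transpose B *v U j)$k * (transpose B *v vexp (U j))$k))"
      (is "0 \<le> ?S")
    and "(\<Sum>j\<in>UNIV. s0$j$j * (\<Sum>k\<in>UNIV. \<kappa>$k * (transpose B *v U j)$k * (transpose B *v vexp (U j))$k)) = 0
       \<Longrightarrow> \<forall>j k. (transpose B *v U j)$k = 0"
proof -
  have s0p: "s0$j$j > 0" for j using s0 by (auto simp: positive_diagonal_def)
  have t: "0 \<le> \<kappa>$k * (transpose B *v U j)$k * (transpose B *v vexp (U j))$k" for j k
    using incid_prod(1)[OF B, of "U j" k] \<kappa> by (simp add: mult.assoc less_imp_le)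
  have t2: "0 \<le> s0$j$j * (\<Sum>k\<in>UNIV. \<kappa>$k * (transpose B *v U j)$k * (transpose B *v vexp (U j))$k)" for j
    by (rule mult_nonneg_nonneg) (use s0p[of j] t in \<open>auto intro: sum_nonneg\<close>)
  show "0 \<le> ?S" using t2 by (intro sum_nonneg) auto
  assume "?S = 0"
  define P where "P j = (\<Sum>k\<in>UNIV. \<kappa>$k * (transpose B *v U j)$k * (transpose B *v vexp (U j))$k)" for j
  have "(\<Sum>j\<in>UNIV. s0$j$j * P j) = 0" using \<open>?S = 0\<close> by (simp add: P_def)
  moreover have "\<forall>j\<in>UNIV. 0 \<le> s0$j$j * P j" using t2 by (simp add: P_def)
  ultimately have h: "\<forall>j\<in>UNIV. s0$j$j * P j = 0"
    using sum_nonneg_eq_0_iff[of UNIV "\<lambda>j. s0$j$j * P j"] by simp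
  have P0: "P j = 0" for j using h[rule_format, of j] s0p[of j] by simp
  show "\<forall>j k. (transpose B *v U j)$k = 0"
  proof (intro allI)
    fix j k
    have "\<forall>k\<in>UNIV. \<kappa>$k * (transpose B *v U j)$k * (transpose B *v vexp (U j))$k = 0"
      using sum_nonneg_eq_0_iff[of UNIV "\<lambda>k. \<kappa>$k * (transpose B *v U j)$k * (transpose B *v vexp (U j))$k"]
        P0[of j] t unfolding P_def by simp
    then have "\<kappa>$k * ((transpose B *v U j)$k * (transpose B *v vexp (U j))$k) = 0"
      by (simp add: mult.assoc)
    then have "(transpose B *v U j)$k * (transpose B *v vexp (U j))$k = 0"
      using \<kappa>[rule_format, of k] by simp
    then show "(transpose B *v U j)$k = 0" by (rule incid_prod(2)[OF B])
  qed
qed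

lemma in_Tset:
  fixes Z :: "real^'c::finite^'m::finite" and B :: "real^'r::finite^'c" and X :: "(real^'m)^'n::finite"
  assumes eq: "\<forall>a b. X$a = X$b" and X: "\<forall>j i. X$j$i > 0" and xs: "\<forall>i. xs$i > 0"
    and z: "\<forall>j k. (transpose B *v (transpose Z *v vln (vdiv (X$j) xs)))$k = 0"
  shows "X \<in> {Y. \<exists>x\<in>{x. (\<forall>i. x$i > 0) \<and>
                         transpose (Z ** B) *v vln x = transpose (Z ** B) *v vln xs}.
                    \<forall>j. Y$j = x}"
proof -
  define x where "x = X$(undefined::'n)"
  have xp: "\<forall>i. x$i > 0" using X by (simp add: x_def)
  have "vln (vdiv x xs) = vln x - vln xs"
    using xp xs by (simp add: vec_eq_iff vln_def vdiv_def ln_div) (metis less_irrefl)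
  moreover have "transpose B *v (transpose Z *v vln (vdiv x xs)) = 0"
    using z by (simp add: vec_eq_iff x_def)
  ultimately have "transpose B *v (transpose Z *v vln x) - transpose B *v (transpose Z *v vln xs) = 0"
    by (simp add: matrix_vector_mult_diff_distrib)
  then have "transpose (Z ** B) *v vln x = transpose (Z ** B) *v vln xs"
    by (simp add: matrix_transpose_mul matrix_vector_mul_assoc[symmetric])
  moreover have "\<forall>j. X$j = x" using eq by (simp add: x_def)
  ultimately show ?thesis using xp by blast
qed



definition hh :: "real \<Rightarrow> real \<Rightarrow> real" where "hh x c = x * ln (x / c) - x + c"

lemma hh_nonneg: assumes "x > 0" "c > 0" shows "hh x c \<ge> 0"
proof -
  have "ln (c / x) \<le> c / x - 1" using assms by (intro ln_le_minus_one) simp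
  then have "ln (x / c) \<ge> 1 - c / x" using assms by (simp add: ln_div)
  then have "x * ln (x / c) \<ge> x * (1 - c / x)" using assms by (intro mult_left_mono) auto
  then show ?thesis using assms by (simp add: hh_def algebra_simps)
qed

lemma hh_bound: assumes "x > 0" "c > 0" shows "x \<le> exp 2 * c + hh x c"
proof (cases "x \<le> exp 2 * c")
  case True then show ?thesis using hh_nonneg[OF assms] by simp
next
  case False
  then have "x / c > exp 2" using assms by (simp add: field_simps)
  then have "ln (exp 2) < ln (x / c)" using assms by (subst ln_less_cancel_iff) auto
  then have "ln (x / c) > 2" by simp
  then have "x * ln (x / c) \<ge> x * 2" using assms by (intro mult_left_mono) auto
  moreover have "exp 2 * c \<ge> 0" using assms by simp
  ultimately show ?thesis using assms unfolding hh_def by linarith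
qed

lemma hh_deriv:
  assumes "(f has_real_derivative f') (at t)" "f t > 0" "c > 0"
  shows "((\<lambda>t. hh (f t) c) has_real_derivative ln (f t / c) * f') (at t)"
proof -
  have "((\<lambda>t. f t * ln (f t / c) - f t + c) has_real_derivative
      (f' * ln (f t / c) + f t * (f' / c / (f t / c)) - f' + 0)) (at t)"
    using assms by (auto intro!: derivative_eq_intros)
  moreover have "f' * ln (f t / c) + f t * (f' / c / (f t / c)) - f' + 0 = ln (f t / c) * f'"
    using assms by (simp add: field_simps)
  ultimately show ?thesis by (simp add: hh_def mult.commute)
qed

lemma kron_cont: "continuous_on S g \<Longrightarrow> continuous_on S (\<lambda>Y. kron_I A (g Y))"
  unfolding kron_I_def by (intro continuous_intros) auto

lemma mv_cont: "continuous_on S g \<Longrightarrow> continuous_on S (\<lambda>Y. (A::real^'b::finite^'a::finite) *v g Y)"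
  unfolding matrix_vector_mult_def by (intro continuous_intros) auto

lemma vexp_cont: "continuous_on S g \<Longrightarrow> continuous_on S (\<lambda>Y. vexp (g Y))"
  unfolding vexp_def by (intro continuous_intros) auto

lemma vln_cont: "continuous_on S g \<Longrightarrow> (\<forall>Y\<in>S. \<forall>i. g Y $ i > 0) \<Longrightarrow> continuous_on S (\<lambda>Y. vln (g Y))"
proof -
  assume c: "continuous_on S g" and p: "\<forall>Y\<in>S. \<forall>i. g Y $ i > 0"
  then have "\<forall>Y\<in>S. \<forall>i. g Y $ i \<noteq> 0" by (metis less_irrefl)
  then show ?thesis unfolding vln_def using c by (intro continuous_intros) auto
qed

lemma vdiv_cont: "continuous_on S g \<Longrightarrow> continuous_on S (\<lambda>Y. vdiv (g Y) xs)"
  unfolding vdiv_def divide_inverse by (intro continuous_intros) auto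

lemma diag_apply_cont: "continuous_on S f \<Longrightarrow> continuous_on S g \<Longrightarrow> continuous_on S (\<lambda>Y. diag_apply (f Y) (g Y))"
  unfolding diag_apply_def by (intro continuous_intros) auto

lemma block_div_cont: "continuous_on S (\<lambda>Y. block_div Y xs)"
  unfolding block_div_def vdiv_def divide_inverse by (intro continuous_intros)

lemma G_cont:
  fixes Z :: "real^'c::finite^'m::finite" and B :: "real^'r::finite^'c"
    and d :: "real^'n::finite^'e::finite" and s0 :: "real^'n^'n" and s1 :: "real^'e^'e"
    and Rd :: "(real^'m)^'n \<Rightarrow> (real^'m)^'e"
  assumes Rc: "continuous_on pos_orthant Rd" and xs: "\<forall>i. xs$i > 0"
  shows "continuous_on pos_orthant (compartmental_rhs Z B \<kappa> xs d s0 s1 Rd)"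
proof -
  have p: "\<forall>Y\<in>pos_orthant. \<forall>i. vdiv (Y$j) xs $ i > 0" for j
    using xs by (simp add: pos_orthant_def vdiv_def)
  have c1: "continuous_on pos_orthant (\<lambda>Y::(real^'m)^'n. Y$j)" for j
    by (intro continuous_intros)
  have c2: "continuous_on pos_orthant (\<lambda>Y::(real^'m)^'n. vdiv (Y$j) xs)" for j
    by (rule vdiv_cont[OF c1])
  have c3: "continuous_on pos_orthant (\<lambda>Y::(real^'m)^'n. vln (vdiv (Y$j) xs))" for j
    by (rule vln_cont[OF c2 p])
  have r: "continuous_on pos_orthant (\<lambda>Y::(real^'m)^'n. reaction_field Z B \<kappa> xs (Y$j))" for j
    unfolding reaction_field_def
    by (intro continuous_on_minus mv_cont vexp_cont c3)
  have r2: "continuous_on pos_orthant (\<lambda>Y::(real^'m)^'n. \<chi> j. reaction_field Z B \<kappa> xs (Y$j))"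
    by (rule continuous_on_vec_lambda[OF r])
  have dpart: "continuous_on pos_orthant (\<lambda>Y. kron_I (matrix_inv s0) (kron_I (transpose d) (kron_I s1
         (diag_apply (Rd Y) (kron_I d (block_div Y xs))))))"
    by (intro kron_cont diag_apply_cont Rc block_div_cont)
  show ?thesis
    unfolding compartmental_rhs_def
    by (intro continuous_on_add continuous_on_minus dpart r2)
qed

definition Vf :: "real^'n^'n \<Rightarrow> real^'m \<Rightarrow> (real^'m)^'n \<Rightarrow> real" where
  "Vf s0 xs Y = (\<Sum>j\<in>UNIV. \<Sum>i\<in>UNIV. s0$j$j * hh (Y$j$i) (xs$i))"

definition Wf :: "((real^'m)^'n \<Rightarrow> (real^'m)^'n) \<Rightarrow> real^'n^'n \<Rightarrow> real^'m \<Rightarrow> (real^'m)^'n \<Rightarrow> real" where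
  "Wf G s0 xs Y = - (\<Sum>j\<in>UNIV. \<Sum>i\<in>UNIV. s0$j$j * ln (Y$j$i / xs$i) * G Y $ j $ i)"

lemma V_deriv:
  fixes X :: "real \<Rightarrow> (real^'m::finite)^'n::finite"
  assumes der: "(X has_vector_derivative G (X t)) (at t)" and pos: "\<forall>j i. X t $ j $ i > 0"
    and xs: "\<forall>i. xs$i > 0"
  shows "((\<lambda>t. Vf s0 xs (X t)) has_real_derivative - Wf G s0 xs (X t)) (at t)"
proof -
  have comp: "((\<lambda>t. X t $ j $ i) has_real_derivative G (X t) $ j $ i) (at t)" for j i
  proof -
    have bl: "bounded_linear (\<lambda>Y::(real^'m)^'n. Y $ j $ i)"
      using bounded_linear_compose[OF bounded_linear_vec_nth[of i] bounded_linear_vec_nth[of j]]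
      by (simp add: o_def)
    show ?thesis
      using bounded_linear.has_vector_derivative[OF bl der]
      by (simp add: has_real_derivative_iff_has_vector_derivative)
  qed
  have "((\<lambda>t. Vf s0 xs (X t)) has_real_derivative
      (\<Sum>j\<in>UNIV. \<Sum>i\<in>UNIV. s0$j$j * (ln (X t $ j $ i / xs$i) * G (X t) $ j $ i))) (at t)"
    unfolding Vf_def
    by (intro DERIV_sum DERIV_cmult hh_deriv comp) (use pos xs in auto)
  moreover have "(\<Sum>j\<in>UNIV. \<Sum>i\<in>UNIV. s0$j$j * (ln (X t $ j $ i / xs$i) * G (X t) $ j $ i))
      = - Wf G s0 xs (X t)"
    by (simp add: Wf_def mult.assoc)
  ultimately show ?thesis by simp
qed

lemma Vf_nonneg:
  assumes "\<forall>j i. Y$j$i > 0" "\<forall>i. xs$i > 0" "positive_diagonal s0"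
  shows "Vf s0 xs Y \<ge> 0"
  unfolding Vf_def using assms
  by (intro sum_nonneg mult_nonneg_nonneg hh_nonneg) (auto simp: positive_diagonal_def less_imp_le)

lemma norm_nested_le: "norm (Y::(real^'m::finite)^'n::finite) \<le> (\<Sum>j\<in>UNIV. \<Sum>i\<in>UNIV. \<bar>Y$j$i\<bar>)"
proof -
  have "norm Y \<le> (\<Sum>j\<in>UNIV. norm (Y$j))"
    unfolding norm_vec_def by (rule L2_set_le_sum) auto
  also have "\<dots> \<le> (\<Sum>j\<in>UNIV. \<Sum>i\<in>UNIV. \<bar>Y$j$i\<bar>)"
    by (intro sum_mono norm_le_l1_cart)
  finally show ?thesis .
qed

lemma bounded_box:
  "bounded {Y::(real^'m::finite)^'n::finite. \<forall>j i. \<bar>Y$j$i\<bar> \<le> M}"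
  unfolding bounded_iff
proof (intro exI ballI)
  fix Y :: "(real^'m)^'n" assume "Y \<in> {Y. \<forall>j i. \<bar>Y$j$i\<bar> \<le> M}"
  then have "(\<Sum>j\<in>UNIV. \<Sum>i\<in>UNIV. \<bar>Y$j$i\<bar>) \<le> (\<Sum>j\<in>(UNIV::'n set). \<Sum>i\<in>(UNIV::'m set). M)"
    by (intro sum_mono) auto
  then show "norm Y \<le> (\<Sum>j\<in>(UNIV::'n set). \<Sum>i\<in>(UNIV::'m set). M)"
    using norm_nested_le[of Y] by linarith
qed

lemma Vf_term:
  assumes "\<forall>j i. Y$j$i > 0" "\<forall>i. xs$i > 0" "positive_diagonal s0"
  shows "s0$j$j * hh (Y$j$i) (xs$i) \<le> Vf s0 xs Y"
proof -
  have nn: "0 \<le> s0$j$j * hh (Y$j$i) (xs$i)" for j i using assms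
    by (intro mult_nonneg_nonneg hh_nonneg) (auto simp: positive_diagonal_def less_imp_le)
  have "s0$j$j * hh (Y$j$i) (xs$i) \<le> (\<Sum>i\<in>UNIV. s0$j$j * hh (Y$j$i) (xs$i))"
    by (rule member_le_sum) (auto intro: nn)
  also have "\<dots> \<le> Vf s0 xs Y"
    unfolding Vf_def by (rule member_le_sum) (auto intro: nn sum_nonneg)
  finally show ?thesis .
qed

theorem theorem8:
  fixes Z :: "real^'c::finite^'m::finite"
    and B :: "real^'r::finite^'c"
    and \<kappa> :: "real^'r"
    and xs :: "real^'m"
    and d :: "real^'n::finite^'e::finite"
    and s0 :: "real^'n^'n"
    and s1 :: "real^'e^'e"
    and Rd :: "(real^'m)^'n \<Rightarrow> (real^'m)^'e"
    and \<alpha> :: real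
  assumes Z_nat: "\<forall>i \<rho>. Z$i$\<rho> \<in> \<nat>"
    and B_inc: "is_incidence_matrix B"
    and xs_pos: "\<forall>i. xs$i > 0"
    and \<kappa>_pos: "\<forall>j. \<kappa>$j > 0"
    and d_inc: "is_connected_skeleton_d d"
    and s0_pos: "positive_diagonal s0"
    and s1_pos: "positive_diagonal s1"
    and \<alpha>_pos: "\<alpha> > 0"
    and Rd_lb: "\<forall>X\<in>pos_orthant. \<forall>e i. (Rd X)$e$i \<ge> \<alpha>"
    and Rd_C1: "\<exists>Rd'. (\<forall>X\<in>pos_orthant. (Rd has_derivative blinfun_apply (Rd' X)) (at X))
                     \<and> continuous_on pos_orthant Rd'"
    and persistent: "\<forall>Y. is_solution (compartmental_rhs Z B \<kappa> xs d s0 s1 Rd) Y \<longrightarrow>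
                        (\<forall>j i. Liminf at_top (\<lambda>t. ereal (Y t $ j $ i)) > 0)"
  shows "\<forall>X. is_solution (compartmental_rhs Z B \<kappa> xs d s0 s1 Rd) X \<longrightarrow>
           ((\<lambda>t. infdist (X t)
              {Y. \<exists>x\<in>{x. (\<forall>i. x$i > 0) \<and>
                         transpose (Z ** B) *v vln x = transpose (Z ** B) *v vln xs}.
                    \<forall>j. Y$j = x}) \<longlongrightarrow> 0) at_top"
  proof (intro allI impI)
  fix X :: "real \<Rightarrow> (real^'m)^'n"
  define G where "G = compartmental_rhs Z B \<kappa> xs d s0 s1 Rd"
  define T where "T = {Y::(real^'m)^'n. \<exists>x\<in>{x. (\<forall>i. x$i > 0) \<and>
                         transpose (Z ** B) *v vln x = transpose (Z ** B) *v vln xs}.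
                    \<forall>j. Y$j = x}"
  define W where "W = Wf G s0 xs"
  define V where "V = Vf s0 xs"
  assume sol0: "is_solution (compartmental_rhs Z B \<kappa> xs d s0 s1 Rd) X"
  then have sol: "is_solution G X" by (simp add: G_def)
  have s0p: "\<And>j. s0$j$j > 0" using s0_pos by (auto simp: positive_diagonal_def)
  have pos: "\<And>t. t \<ge> 0 \<Longrightarrow> \<forall>j i. X t $ j $ i > 0"
    using sol by (auto simp: is_solution_def pos_orthant_def)
  have posO: "\<And>t. t \<ge> 0 \<Longrightarrow> X t \<in> pos_orthant"
    using sol by (auto simp: is_solution_def)
  have der: "\<And>t. t > 0 \<Longrightarrow> (X has_vector_derivative G (X t)) (at t)"
  proof -
    fix t :: real assume t: "t > 0"
    have "(X has_vector_derivative G (X t)) (at t within {0..})"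
      using sol t by (auto simp: is_solution_def)
    moreover have "at t within {0..} = at t"
      using t by (intro at_within_interior) (simp add: interior_real_atLeast)
    ultimately show "(X has_vector_derivative G (X t)) (at t)" by simp
  qed
  have Vd: "\<And>t. t > 0 \<Longrightarrow> ((\<lambda>t. V (X t)) has_real_derivative - W (X t)) (at t)"
    unfolding V_def W_def using der pos xs_pos by (intro V_deriv) auto
  have Wprops: "W Y \<ge> 0 \<and> (W Y = 0 \<longrightarrow> Y \<in> T)" if YP: "Y \<in> pos_orthant" for Y
  proof -
    have Yp: "\<forall>j i. Y$j$i > 0" using YP by (simp add: pos_orthant_def)
    have Rp: "\<forall>e i. Rd Y $ e $ i > 0" using Rd_lb YP \<alpha>_pos by (auto intro: less_le_trans)
    define U where "U j = transpose Z *v vln (vdiv (Y$j) xs)" for j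
    have Weq: "W Y = (\<Sum>e\<in>UNIV. \<Sum>i\<in>UNIV. s1$e$e * Rd Y $e$i * (\<Sum>j\<in>UNIV. d$e$j * ln (Y$j$i / xs$i))
          * (\<Sum>k\<in>UNIV. d$e$k * (Y$k$i / xs$i)))
      + (\<Sum>j\<in>UNIV. s0$j$j * (\<Sum>k\<in>UNIV. \<kappa>$k * (transpose B *v U j)$k * (transpose B *v vexp (U j))$k))"
      unfolding W_def Wf_def G_def W_decomp[OF s0_pos s1_pos] U_def by simp
    note D = Dterm_props[OF d_inc s1_pos Rp Yp xs_pos]
    note R = Rterm_props[OF B_inc s0_pos \<kappa>_pos, of U]
    show ?thesis
    proof
      show "W Y \<ge> 0" unfolding Weq using D(1) R(1) by linarith
      show "W Y = 0 \<longrightarrow> Y \<in> T"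
      proof
        assume "W Y = 0"
        then have z1: "(\<Sum>e\<in>UNIV. \<Sum>i\<in>UNIV. s1$e$e * Rd Y $e$i * (\<Sum>j\<in>UNIV. d$e$j * ln (Y$j$i / xs$i))
          * (\<Sum>k\<in>UNIV. d$e$k * (Y$k$i / xs$i))) = 0"
          and z2: "(\<Sum>j\<in>UNIV. s0$j$j * (\<Sum>k\<in>UNIV. \<kappa>$k * (transpose B *v U j)$k * (transpose B *v vexp (U j))$k)) = 0"
          unfolding Weq using D(1) R(1) by linarith+
        show "Y \<in> T" unfolding T_def
          by (rule in_Tset[OF D(2)[OF z1] Yp xs_pos]) (use R(2)[OF z2] in \<open>simp add: U_def\<close>)
      qed
    qed
  qed
  have Wnn: "\<And>t. t \<ge> 0 \<Longrightarrow> W (X t) \<ge> 0" using Wprops posO by blast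
  have Vmono: "V (X b) \<le> V (X a)" if ab: "0 < a" "a \<le> b" for a b
  proof (rule DERIV_nonpos_imp_nonincreasing[OF ab(2)])
    fix x assume "a \<le> x" "x \<le> b"
    then have x0: "x > 0" using ab by simp
    show "\<exists>y. ((\<lambda>t. V (X t)) has_real_derivative y) (at x) \<and> y \<le> 0"
      using Vd[OF x0] Wnn[of x] x0 by (intro exI[of _ "- W (X x)"]) auto
  qed
  have Vnn: "\<And>t. t \<ge> 0 \<Longrightarrow> V (X t) \<ge> 0"
    unfolding V_def using pos xs_pos s0_pos by (intro Vf_nonneg) auto
  obtain Rd' where Rd': "\<forall>X\<in>pos_orthant. (Rd has_derivative blinfun_apply (Rd' X)) (at X)"
    using Rd_C1 by blast
  have Rc: "continuous_on pos_orthant Rd"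
    using Rd' by (intro continuous_at_imp_continuous_on) (auto intro: has_derivative_continuous)
  have Gc: "continuous_on pos_orthant G"
    unfolding G_def by (rule G_cont[OF Rc xs_pos])
  have lnc: "continuous_on pos_orthant (\<lambda>Y::(real^'m)^'n. ln (Y$j$i / xs$i))" for j i
  proof -
    have xi: "xs$i > 0" using xs_pos by simp
    have "\<forall>Y\<in>pos_orthant. (Y::(real^'m)^'n)$j$i / xs$i \<noteq> 0"
    proof
      fix Y :: "(real^'m)^'n" assume "Y \<in> pos_orthant"
      then have "Y$j$i > 0" by (simp add: pos_orthant_def)
      then show "Y$j$i / xs$i \<noteq> 0" using xi by simp
    qed
    then show ?thesis
      unfolding divide_inverse by (intro continuous_intros) (auto simp: divide_inverse)
  qed
  have Wc: "continuous_on pos_orthant W"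
    unfolding W_def Wf_def
    by (intro continuous_intros lnc Gc)
  define V1 where "V1 = V (X 1)"
  have V1nn: "V1 \<ge> 0" unfolding V1_def using Vnn by simp
  define M where "M = (\<Sum>j\<in>(UNIV::'n set). \<Sum>i\<in>(UNIV::'m set). exp 2 * xs$i + V1 / s0$j$j)"
  have termnn: "0 \<le> exp 2 * xs$i + V1 / s0$j$j" for j i
  proof -
    have "0 \<le> exp 2 * xs$i" using xs_pos[rule_format, of i] by simp
    moreover have "0 \<le> V1 / s0$j$j" using V1nn s0p[of j] by simp
    ultimately show ?thesis by simp
  qed
  have upper: "X t $ j $ i \<le> M" if t1: "t \<ge> 1" for t j i
  proof -
    have Xp: "\<forall>j i. X t $ j $ i > 0" using pos t1 by simp
    have "s0$j$j * hh (X t $ j $ i) (xs$i) \<le> V (X t)"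
      unfolding V_def by (rule Vf_term[OF Xp xs_pos s0_pos])
    also have "\<dots> \<le> V1" unfolding V1_def using Vmono t1 by simp
    finally have "hh (X t $ j $ i) (xs$i) \<le> V1 / s0$j$j"
      using s0p[of j] by (simp add: field_simps)
    then have "X t $ j $ i \<le> exp 2 * xs$i + V1 / s0$j$j"
      using hh_bound[of "X t $ j $ i" "xs$i"] Xp xs_pos by fastforce
    also have "\<dots> \<le> (\<Sum>i\<in>(UNIV::'m set). exp 2 * xs$i + V1 / s0$j$j)"
      by (rule member_le_sum) (auto intro: termnn)
    also have "\<dots> \<le> M" unfolding M_def
      by (rule member_le_sum) (auto intro: termnn sum_nonneg)
    finally show ?thesis .
  qed
  have lb1: "\<exists>\<delta>>0. eventually (\<lambda>t. \<delta> < X t $ fst p $ snd p) at_top" for p :: "'n \<times> 'm"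
  proof -
    have "Liminf at_top (\<lambda>t. ereal (X t $ fst p $ snd p)) > 0"
      using persistent sol0 by blast
    then obtain z where z: "0 < ereal z" "ereal z < Liminf at_top (\<lambda>t. ereal (X t $ fst p $ snd p))"
      using ereal_dense2 by blast
    have "eventually (\<lambda>t. ereal z < ereal (X t $ fst p $ snd p)) at_top"
      by (rule less_LiminfD[OF z(2)])
    then have "eventually (\<lambda>t. z < X t $ fst p $ snd p) at_top" by simp
    moreover have "z > 0" using z(1) by simp
    ultimately show ?thesis by blast
  qed
  then have "\<exists>f. \<forall>p. f p > 0 \<and> eventually (\<lambda>t. f p < X t $ fst p $ snd p) at_top"
    by (rule choice[OF allI])
  then obtain \<delta>f where \<delta>f: "\<And>p. \<delta>f p > 0" "\<And>p. eventually (\<lambda>t. \<delta>f p < X t $ fst p $ snd p) at_top"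
    by blast
  have "eventually (\<lambda>t. \<forall>p. \<delta>f p < X t $ fst p $ snd p) at_top"
    by (rule eventually_all_finite) (rule \<delta>f(2))
  then obtain T0 where T0: "\<And>t. t \<ge> T0 \<Longrightarrow> \<forall>p. \<delta>f p < X t $ fst p $ snd p"
    by (auto simp: eventually_at_top_linorder)
  define T1 where "T1 = max T0 1"
  have T1p: "T1 > 0" "T1 \<ge> 1" by (auto simp: T1_def)
  define K where "K = {Y::(real^'m)^'n. \<forall>j i. \<delta>f (j, i) \<le> Y$j$i \<and> Y$j$i \<le> M}"
  have XK: "X t \<in> K" if "t \<ge> T1" for t
  proof -
    have tT0: "T0 \<le> t" using that by (simp add: T1_def)
    have "\<delta>f (j, i) < X t $ fst (j, i) $ snd (j, i)" for j i using T0[OF tT0] by blast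
    then have "\<delta>f (j, i) \<le> X t $ j $ i" for j i by (simp add: less_imp_le)
    moreover have "X t $ j $ i \<le> M" for j i using upper that T1p by simp
    ultimately show ?thesis by (simp add: K_def)
  qed
  have KP: "K \<subseteq> pos_orthant"
  proof
    fix Y assume "Y \<in> K"
    then have "\<delta>f (j, i) \<le> Y$j$i" for j i by (simp add: K_def)
    then have "0 < Y$j$i" for j i using \<delta>f(1)[of "(j, i)"] by (rule less_le_trans[rotated])
    then show "Y \<in> pos_orthant" by (simp add: pos_orthant_def)
  qed
  have Kcl: "closed K"
    unfolding K_def by (intro closed_Collect_all closed_Collect_conj closed_Collect_le continuous_intros)
  have Kbd: "bounded K"
  proof (rule bounded_subset[OF bounded_box[of M]])
    show "K \<subseteq> {Y. \<forall>j i. \<bar>Y$j$i\<bar> \<le> M}"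
    proof
      fix Y assume "Y \<in> K"
      then have a1: "\<delta>f (j, i) \<le> Y$j$i" and a2: "Y$j$i \<le> M" for j i by (simp_all add: K_def)
      have "\<bar>Y$j$i\<bar> \<le> M" for j i using \<delta>f(1)[of "(j, i)"] a1[of j i] a2[of j i] by linarith
      then show "Y \<in> {Y. \<forall>j i. \<bar>Y$j$i\<bar> \<le> M}" by simp
    qed
  qed
  have Kc: "compact K" using Kcl Kbd by (simp add: compact_eq_bounded_closed)
  have "compact (G ` K)"
    by (rule compact_continuous_image[OF continuous_on_subset[OF Gc KP] Kc])
  then obtain Lb where Lb: "Lb > 0" "\<And>Y. Y \<in> K \<Longrightarrow> norm (G Y) \<le> Lb"
    using compact_imp_bounded[of "G ` K"] unfolding bounded_pos by auto
  define Lp where "Lp = 3 * Lb"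
  have Lpp: "Lp > 0" using Lb by (simp add: Lp_def)
  have lip: "norm (X b - X a) \<le> Lp * (b - a)" if ab: "T1 \<le> a" "a \<le> b" for a b
  proof -
    have d1: "(X has_vector_derivative G (X x)) (at x within {a..b})" if "x \<in> {a..b}" for x
      using der[of x] that ab T1p by (auto intro: has_vector_derivative_at_within)
    have d2: "norm (G (X x) - G (X a)) \<le> 2 * Lb" if "x \<in> {a..b}" for x
    proof -
      have "norm (G (X x) - G (X a)) \<le> norm (G (X x)) + norm (G (X a))" by (rule norm_triangle_ineq4)
      also have "\<dots> \<le> 2 * Lb"
      proof -
        have "norm (G (X x)) \<le> Lb" using Lb(2)[OF XK[of x]] that ab by simp
        moreover have "norm (G (X a)) \<le> Lb" using Lb(2)[OF XK[of a]] ab by simp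
        ultimately show ?thesis by simp
      qed
      finally show ?thesis .
    qed
    have "norm (X b - X a - (b - a) *\<^sub>R G (X a)) \<le> norm (b - a) * (2 * Lb)"
      by (rule vector_differentiable_bound_linearization[OF d1 _ d2])
         (use ab in \<open>auto simp: closed_segment_eq_real_ivl\<close>)
    moreover have "norm ((b - a) *\<^sub>R G (X a)) \<le> (b - a) * Lb"
      using Lb(2)[OF XK[of a]] ab by (simp add: mult_left_mono)
    moreover have "norm (X b - X a) \<le> norm (X b - X a - (b - a) *\<^sub>R G (X a)) + norm ((b - a) *\<^sub>R G (X a))"
      using norm_triangle_ineq[of "X b - X a - (b - a) *\<^sub>R G (X a)" "(b - a) *\<^sub>R G (X a)"] by simp
    ultimately show ?thesis using ab by (simp add: Lp_def algebra_simps)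
  qed
  show "((\<lambda>t. infdist (X t) T) \<longlongrightarrow> 0) at_top"
  proof (rule ccontr)
    assume nt: "\<not> ((\<lambda>t. infdist (X t) T) \<longlongrightarrow> 0) at_top"
    obtain \<epsilon> where \<epsilon>: "\<epsilon> > 0" "\<And>S. \<exists>t\<ge>S. infdist (X t) T \<ge> \<epsilon>"
    proof -
      from nt obtain \<epsilon> where e: "\<epsilon> > 0" "\<not> eventually (\<lambda>t. dist (infdist (X t) T) 0 < \<epsilon>) at_top"
        unfolding tendsto_iff by blast
      have "\<exists>t\<ge>S. infdist (X t) T \<ge> \<epsilon>" for S
      proof -
        obtain t where t: "t \<ge> S" "\<not> dist (infdist (X t) T) 0 < \<epsilon>"
          using e(2) unfolding eventually_at_top_linorder by blast
        then have "infdist (X t) T \<ge> \<epsilon>" using infdist_nonneg[of "X t" T] by (simp add: dist_real_def)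
        then show ?thesis using t(1) by blast
      qed
      then show ?thesis using e(1) that by blast
    qed
    define C where "C = K \<inter> {Y. \<epsilon> / 2 \<le> infdist Y T}"
    have Cc: "compact C" unfolding C_def
      by (intro compact_Int_closed Kc closed_Collect_le continuous_intros continuous_on_infdist)
    obtain c where c: "c > 0" "\<And>Y. Y \<in> C \<Longrightarrow> W Y \<ge> c"
    proof (cases "C = {}")
      case True then show ?thesis using that[of 1] by auto
    next
      case False
      obtain Y0 where Y0: "Y0 \<in> C" "\<And>Y. Y \<in> C \<Longrightarrow> W Y0 \<le> W Y"
        using continuous_attains_inf[OF Cc False continuous_on_subset[OF Wc]] KP
        unfolding C_def by blast
      have "Y0 \<in> pos_orthant" using Y0(1) KP unfolding C_def by blast
      then have "W Y0 \<ge> 0" "W Y0 = 0 \<longrightarrow> Y0 \<in> T" using Wprops by blast+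
      moreover have "Y0 \<notin> T"
      proof
        assume "Y0 \<in> T"
        then have "infdist Y0 T = 0" by (rule infdist_zero)
        then show False using Y0(1) \<epsilon>(1) unfolding C_def by simp
      qed
      ultimately have "W Y0 > 0" by fastforce
      then show ?thesis using that[of "W Y0"] Y0 by blast
    qed
    define h where "h = \<epsilon> / (2 * Lp)"
    have hp: "h > 0" using \<epsilon>(1) Lpp by (simp add: h_def)
    have step: "V (X (s + h)) \<le> V (X s) - c * h" if s: "s \<ge> T1" "infdist (X s) T \<ge> \<epsilon>" for s
    proof -
      have inC: "X t \<in> C" if t: "s \<le> t" "t \<le> s + h" for t
      proof -
        have "infdist (X s) T \<le> infdist (X t) T + dist (X s) (X t)" by (rule infdist_triangle)
        moreover have "dist (X s) (X t) \<le> Lp * (t - s)"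
          using lip[of s t] s t by (simp add: dist_norm norm_minus_commute)
        moreover have "Lp * (t - s) \<le> Lp * h" using t Lpp by simp
        moreover have "Lp * h = \<epsilon> / 2" using Lpp by (simp add: h_def)
        ultimately have "infdist (X t) T \<ge> \<epsilon> / 2" using s(2) by linarith
        then show ?thesis using XK[of t] s t unfolding C_def by simp
      qed
      define f where "f t = V (X t) + c * t" for t
      have "f (s + h) \<le> f s"
      proof (rule DERIV_nonpos_imp_nonincreasing[of s "s + h" f])
        show "s \<le> s + h" using hp by simp
      next
        fix x assume x: "s \<le> x" "x \<le> s + h"
        then have x0: "x > 0" using s T1p by simp
        have "((\<lambda>t. V (X t) + c * t) has_real_derivative - W (X x) + c * 1) (at x)"
          by (intro DERIV_add Vd[OF x0] DERIV_cmult DERIV_ident)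
        then have "(f has_real_derivative - W (X x) + c * 1) (at x)" by (simp add: f_def[abs_def])
        moreover have "- W (X x) + c * 1 \<le> 0" using c(2)[OF inC[OF x]] by simp
        ultimately show "\<exists>y. (f has_real_derivative y) (at x) \<and> y \<le> 0" by blast
      qed
      then show ?thesis by (simp add: f_def algebra_simps)
    qed
    have iter: "\<exists>t\<ge>T1. V (X t) \<le> V (X T1) - real k * (c * h)" for k :: nat
    proof (induction k)
      case 0 then show ?case by auto
    next
      case (Suc k)
      then obtain t where t: "t \<ge> T1" "V (X t) \<le> V (X T1) - real k * (c * h)" by blast
      obtain s where s: "s \<ge> t" "infdist (X s) T \<ge> \<epsilon>" using \<epsilon>(2) by blast
      have "V (X s) \<le> V (X t)" using Vmono[of t s] s t T1p by simp
      moreover have "V (X (s + h)) \<le> V (X s) - c * h" using step[of s] s t by simp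
      ultimately have "V (X (s + h)) \<le> V (X T1) - real (Suc k) * (c * h)"
        using t by (simp add: algebra_simps)
      moreover have "s + h \<ge> T1" using s t hp by simp
      ultimately show ?case by blast
    qed
    obtain k :: nat where k: "V (X T1) < real k * (c * h)"
      using ex_less_of_nat_mult[of "c * h" "V (X T1)"] c(1) hp by auto
    obtain t where t: "t \<ge> T1" "V (X t) \<le> V (X T1) - real k * (c * h)" using iter by blast
    have "V (X t) \<ge> 0" using Vnn t T1p by simp
    then show False using t k by simp
  qed
qed

end
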